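(* Let $L$ be a simple Lie algebra over a field $k$ with $|k|>2$, generated by its pure extremal elements, such that there exists a Galois extension $k'/k$ of degree at most $2$ for which the extremal geometry of $L\otimes_k k'$ contains lines, and such that there exist symplectic pairs of extremal elements in $L$. Then $L_{k'}:=L\otimes_k k'$ is simple.
   Context: A nonzero $a$ in a Lie algebra $M$ over $F$ is extremal if there is $g_a\colon M\to F$ with $[a,[a,u]]=2g_a(u)a$, $[[a,u],[a,w]]=g_a([u,w])a+g_a(w)[a,u]-g_a(u)[a,w]$, $[a,[u,[a,w]]]=g_a([u,w])a-g_a(w)[a,u]-g_a(u)[a,w]$ for all $u,w$; sandwiches satisfy $[a,[a,u]]=0=[a,[u,[a,w]]]$; pure = non-sandwich. Pure extremal $a,b$ with $Fa\ne Fb$ are collinear if $[a,b]=0$ and $\lambda a+\mu b$ is extremal or $0$ for all $\lambda,\mu$, and symplectic if $[a,b]=0$ and $\lambda a+\mu b$ is extremal or $0$ only when $\lambda\mu=0$. The extremal geometry (points: $Fa$, $a$ extremal; lines: spans of collinear pairs) contains lines iff a collinear pair exists. *)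

theory Defs
  imports Complex_Main
begin

definition lie_algebra :: "('k::field \<Rightarrow> 'l::ab_group_add \<Rightarrow> 'l) \<Rightarrow> ('l \<Rightarrow> 'l \<Rightarrow> 'l) \<Rightarrow> bool" where
  "lie_algebra sc br \<longleftrightarrow>
     module sc \<and>
     (\<forall>x y z. br (x + y) z = br x z + br y z) \<and>
     (\<forall>x y z. br x (y + z) = br x y + br x z) \<and>
     (\<forall>c x y. br (sc c x) y = sc c (br x y)) \<and>
     (\<forall>c x y. br x (sc c y) = sc c (br x y)) \<and>
     (\<forall>x. br x x = 0) \<and>
     (\<forall>x y z. br x (br y z) + br y (br z x) + br z (br x y) = 0)"

definition lie_ideal :: "('k::field \<Rightarrow> 'l::ab_group_add \<Rightarrow> 'l) \<Rightarrow> ('l \<Rightarrow> 'l \<Rightarrow> 'l) \<Rightarrow> 'l set \<Rightarrow> bool" where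
  "lie_ideal sc br I \<longleftrightarrow> module.subspace sc I \<and> (\<forall>x y. y \<in> I \<longrightarrow> br x y \<in> I)"

definition simple_lie :: "('k::field \<Rightarrow> 'l::ab_group_add \<Rightarrow> 'l) \<Rightarrow> ('l \<Rightarrow> 'l \<Rightarrow> 'l) \<Rightarrow> bool" where
  "simple_lie sc br \<longleftrightarrow> (\<exists>x y. br x y \<noteq> 0) \<and>
     (\<forall>I. lie_ideal sc br I \<longrightarrow> I = {0} \<or> I = UNIV)"

definition lie_subalgebra :: "('k::field \<Rightarrow> 'l::ab_group_add \<Rightarrow> 'l) \<Rightarrow> ('l \<Rightarrow> 'l \<Rightarrow> 'l) \<Rightarrow> 'l set \<Rightarrow> bool" where
  "lie_subalgebra sc br S \<longleftrightarrow> module.subspace sc S \<and> (\<forall>x\<in>S. \<forall>y\<in>S. br x y \<in> S)"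

definition lie_generated :: "('k::field \<Rightarrow> 'l::ab_group_add \<Rightarrow> 'l) \<Rightarrow> ('l \<Rightarrow> 'l \<Rightarrow> 'l) \<Rightarrow> 'l set \<Rightarrow> 'l set" where
  "lie_generated sc br E = \<Inter>{S. lie_subalgebra sc br S \<and> E \<subseteq> S}"

definition extremal_form :: "('k::field \<Rightarrow> 'l::ab_group_add \<Rightarrow> 'l) \<Rightarrow> ('l \<Rightarrow> 'l \<Rightarrow> 'l) \<Rightarrow> 'l \<Rightarrow> ('l \<Rightarrow> 'k) \<Rightarrow> bool" where
  "extremal_form sc br a g \<longleftrightarrow>
     (\<forall>u. br a (br a u) = sc (2 * g u) a) \<and>
     (\<forall>u w. br (br a u) (br a w) = sc (g (br u w)) a + sc (g w) (br a u) - sc (g u) (br a w)) \<and>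
     (\<forall>u w. br a (br u (br a w)) = sc (g (br u w)) a - sc (g w) (br a u) - sc (g u) (br a w))"

definition extremal :: "('k::field \<Rightarrow> 'l::ab_group_add \<Rightarrow> 'l) \<Rightarrow> ('l \<Rightarrow> 'l \<Rightarrow> 'l) \<Rightarrow> 'l \<Rightarrow> bool" where
  "extremal sc br a \<longleftrightarrow> a \<noteq> 0 \<and> (\<exists>g. extremal_form sc br a g)"

definition sandwich :: "('k::field \<Rightarrow> 'l::ab_group_add \<Rightarrow> 'l) \<Rightarrow> ('l \<Rightarrow> 'l \<Rightarrow> 'l) \<Rightarrow> 'l \<Rightarrow> bool" where
  "sandwich sc br a \<longleftrightarrow> extremal sc br a \<and>
     (\<forall>u. br a (br a u) = 0) \<and> (\<forall>u w. br a (br u (br a w)) = 0)"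

definition pure_extremal :: "('k::field \<Rightarrow> 'l::ab_group_add \<Rightarrow> 'l) \<Rightarrow> ('l \<Rightarrow> 'l \<Rightarrow> 'l) \<Rightarrow> 'l \<Rightarrow> bool" where
  "pure_extremal sc br a \<longleftrightarrow> extremal sc br a \<and> \<not> sandwich sc br a"

definition collinear_pair :: "('k::field \<Rightarrow> 'l::ab_group_add \<Rightarrow> 'l) \<Rightarrow> ('l \<Rightarrow> 'l \<Rightarrow> 'l) \<Rightarrow> 'l \<Rightarrow> 'l \<Rightarrow> bool" where
  "collinear_pair sc br a b \<longleftrightarrow>
     pure_extremal sc br a \<and> pure_extremal sc br b \<and>
     module.span sc {a} \<noteq> module.span sc {b} \<and> br a b = 0 \<and>
     (\<forall>s t. extremal sc br (sc s a + sc t b) \<or> sc s a + sc t b = 0)"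

definition symplectic_pair :: "('k::field \<Rightarrow> 'l::ab_group_add \<Rightarrow> 'l) \<Rightarrow> ('l \<Rightarrow> 'l \<Rightarrow> 'l) \<Rightarrow> 'l \<Rightarrow> 'l \<Rightarrow> bool" where
  "symplectic_pair sc br a b \<longleftrightarrow>
     pure_extremal sc br a \<and> pure_extremal sc br b \<and>
     module.span sc {a} \<noteq> module.span sc {b} \<and> br a b = 0 \<and>
     (\<forall>s t. (extremal sc br (sc s a + sc t b) \<or> sc s a + sc t b = 0) \<longrightarrow> s * t = 0)"

text \<open>The extremal geometry contains lines iff there is a collinear pair.\<close>
definition geometry_has_lines :: "('k::field \<Rightarrow> 'l::ab_group_add \<Rightarrow> 'l) \<Rightarrow> ('l \<Rightarrow> 'l \<Rightarrow> 'l) \<Rightarrow> bool" where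
  "geometry_has_lines sc br \<longleftrightarrow> (\<exists>a b. collinear_pair sc br a b)"

definition field_hom :: "('k::field \<Rightarrow> 'K::field) \<Rightarrow> bool" where
  "field_hom \<iota> \<longleftrightarrow> (\<forall>a b. \<iota> (a + b) = \<iota> a + \<iota> b) \<and> (\<forall>a b. \<iota> (a * b) = \<iota> a * \<iota> b) \<and> \<iota> 1 = 1"

definition ext_scale :: "('k::field \<Rightarrow> 'K::field) \<Rightarrow> 'k \<Rightarrow> 'K \<Rightarrow> 'K" where
  "ext_scale \<iota> c x = \<iota> c * x"

definition ext_degree_le :: "('k::field \<Rightarrow> 'K::field) \<Rightarrow> nat \<Rightarrow> bool" where
  "ext_degree_le \<iota> n \<longleftrightarrow> (\<exists>B. finite B \<and> card B \<le> n \<and> module.span (ext_scale \<iota>) B = UNIV)"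

definition rel_automorphism :: "('k::field \<Rightarrow> 'K::field) \<Rightarrow> ('K \<Rightarrow> 'K) \<Rightarrow> bool" where
  "rel_automorphism \<iota> \<sigma> \<longleftrightarrow> bij \<sigma> \<and> (\<forall>x y. \<sigma> (x + y) = \<sigma> x + \<sigma> y) \<and>
     (\<forall>x y. \<sigma> (x * y) = \<sigma> x * \<sigma> y) \<and> (\<forall>c. \<sigma> (\<iota> c) = \<iota> c)"

text \<open>A finite extension is Galois iff the fixed field of its automorphism group is the base field.\<close>
definition galois_ext :: "('k::field \<Rightarrow> 'K::field) \<Rightarrow> bool" where
  "galois_ext \<iota> \<longleftrightarrow> field_hom \<iota> \<and> (\<exists>n. ext_degree_le \<iota> n) \<and>
     {x. \<forall>\<sigma>. rel_automorphism \<iota> \<sigma> \<longrightarrow> \<sigma> x = x} = range \<iota>"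

text \<open>(M, scM, brM) together with j : L \<rightarrow> M realises L \<otimes>_k K: M is a K-Lie algebra,
j is k-linear (k acting on M through \<iota>) and bracket preserving, and j maps every
k-basis of L injectively onto a K-basis of M.\<close>
definition scalar_extension ::
  "('k::field \<Rightarrow> 'K::field) \<Rightarrow> ('k \<Rightarrow> 'l::ab_group_add \<Rightarrow> 'l) \<Rightarrow> ('l \<Rightarrow> 'l \<Rightarrow> 'l) \<Rightarrow>
   ('K \<Rightarrow> 'm::ab_group_add \<Rightarrow> 'm) \<Rightarrow> ('m \<Rightarrow> 'm \<Rightarrow> 'm) \<Rightarrow> ('l \<Rightarrow> 'm) \<Rightarrow> bool" where
  "scalar_extension \<iota> scL brL scM brM j \<longleftrightarrow>
     lie_algebra scM brM \<and>
     (\<forall>x y. j (x + y) = j x + j y) \<and>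
     (\<forall>c x. j (scL c x) = scM (\<iota> c) (j x)) \<and>
     (\<forall>x y. j (brL x y) = brM (j x) (j y)) \<and>
     (\<forall>B. (\<not> module.dependent scL B \<and> module.span scL B = UNIV) \<longrightarrow>
        inj_on j B \<and> \<not> module.dependent scM (j ` B) \<and> module.span scM (j ` B) = UNIV)"

end

theory Submission
  imports Defs
begin

context fixes sc :: "'k::field \<Rightarrow> 'l::ab_group_add \<Rightarrow> 'l" and br assumes L: "lie_algebra sc br"
begin

interpretation m: module sc using L unfolding lie_algebra_def by simp

lemma br_addl: "br (x + y) z = br x z + br y z" using L unfolding lie_algebra_def by blast
lemma br_addr: "br x (y + z) = br x y + br x z" using L unfolding lie_algebra_def by blast
lemma br_scl: "br (sc c x) y = sc c (br x y)" using L unfolding lie_algebra_def by blast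
lemma br_scr: "br x (sc c y) = sc c (br x y)" using L unfolding lie_algebra_def by blast
lemma br_self: "br x x = 0" using L unfolding lie_algebra_def by blast

lemma br_0l[simp]: "br 0 y = 0" using br_addl[of 0 0 y] by simp
lemma br_0r[simp]: "br y 0 = 0" using br_addr[of y 0 0] by simp
lemma br_neg_r: "br x (- y) = - br x y" using br_addr[of x y "-y"] by (simp add: eq_neg_iff_add_eq_0 add.commute)
lemma br_neg_l: "br (- x) y = - br x y" using br_addl[of x "-x" y] by (simp add: eq_neg_iff_add_eq_0 add.commute)
lemma br_diff_r: "br x (y - z) = br x y - br x z" using br_addr[of x y "-z"] br_neg_r by simp
lemma br_diff_l: "br (x - y) z = br x z - br y z" using br_addl[of x "-y" z] br_neg_l by simp
lemma br_anti: "br y x = - br x y"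
proof -
  have "br (x+y) (x+y) = br x y + br y x" by (simp add: br_addl br_addr br_self[of x] br_self[of y])
  then have "br y x + br x y = 0" using br_self[of "x+y"] by (simp add: add.commute)
  then show ?thesis by (simp add: eq_neg_iff_add_eq_0)
qed

lemma centroid_scalar:
  assumes simple: "simple_lie sc br"
    and px: "pure_extremal sc br x"
    and phi_add: "\<And>a b. \<phi> (a + b) = \<phi> a + \<phi> b"
    and phi_sc: "\<And>c a. \<phi> (sc c a) = sc c (\<phi> a)"
    and phi_br: "\<And>a b. \<phi> (br a b) = br a (\<phi> b)"
  shows "\<exists>\<mu>. \<forall>a. \<phi> a = sc \<mu> a"
proof -
  have ideals: "\<And>I. lie_ideal sc br I \<Longrightarrow> I = {0} \<or> I = UNIV" using simple unfolding simple_lie_def by blast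
  obtain x0 y0 where nab: "br x0 y0 \<noteq> 0" using simple unfolding simple_lie_def by blast
  have x0: "x \<noteq> 0" and ext: "extremal sc br x" and ns: "\<not> sandwich sc br x"
    using px unfolding pure_extremal_def extremal_def by auto
  then obtain g where g: "extremal_form sc br x g" unfolding extremal_def by blast
  have I1: "\<And>u. br x (br x u) = sc (2 * g u) x" using g unfolding extremal_form_def by blast
  have I2: "\<And>u w. br (br x u) (br x w) = sc (g (br u w)) x + sc (g w) (br x u) - sc (g u) (br x w)"
    using g unfolding extremal_form_def by blast
  have I3: "\<And>u w. br x (br u (br x w)) = sc (g (br u w)) x - sc (g w) (br x u) - sc (g u) (br x w)"
    using g unfolding extremal_form_def by blast
  have phi0: "\<phi> 0 = 0" using phi_add[of 0 0] by simp
  obtain w0 where gw0: "g w0 \<noteq> 0"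
  proof -
    have "\<exists>w0. g w0 \<noteq> 0"
    proof (rule ccontr)
      assume "\<not> ?thesis"
      then have "\<And>u. g u = 0" by blast
      then have "sandwich sc br x" using ext I1 I3 unfolding sandwich_def by simp
      with ns show False by blast
    qed
    then show ?thesis using that by blast
  qed
  obtain v where v: "\<And>c. br x v \<noteq> sc c x"
  proof -
    have "\<exists>v. \<forall>c. br x v \<noteq> sc c x"
    proof (rule ccontr)
      assume "\<not> ?thesis"
      then have hv: "\<And>v. \<exists>c. br x v = sc c x" by blast
      let ?S = "range (\<lambda>c. sc c x)"
      have "lie_ideal sc br ?S"
        unfolding lie_ideal_def m.subspace_def
      proof (intro conjI allI impI ballI)
        show "0 \<in> ?S" by (rule range_eqI[of _ _ 0]) simp
        show "a + b \<in> ?S" if ab: "a \<in> ?S" "b \<in> ?S" for a b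
        proof -
          obtain c d where "a = sc c x" "b = sc d x" using ab by auto
          then show ?thesis by (auto intro!: range_eqI[of _ _ "c + d"] simp: m.scale_left_distrib)
        qed
        show "sc c a \<in> ?S" if "a \<in> ?S" for c a
          using that by auto
        show "br y a \<in> ?S" if aS: "a \<in> ?S" for y a
        proof -
          obtain c where a: "a = sc c x" using aS by auto
          obtain d where d: "br x y = sc d x" using hv by blast
          have "br y a = sc (- (c * d)) x" unfolding a br_scr using br_anti[of y x] d by simp
          then show ?thesis by (auto intro!: range_eqI[of _ _ "- (c * d)"])
        qed
      qed
      then have "?S = {0} \<or> ?S = UNIV" using ideals by blast
      moreover have "x \<in> ?S" by (rule range_eqI[of _ _ 1]) simp
      ultimately have "?S = UNIV" using x0 by auto
      then obtain c d where "x0 = sc c x" "y0 = sc d x" by (metis UNIV_I imageE)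
      then have "br x0 y0 = 0" by (simp add: br_scl br_scr br_self)
      with nab show False by simp
    qed
    then show ?thesis using that by blast
  qed
  have gadd: "g (w1 + w2) = g w1 + g w2" for w1 w2
  proof (rule ccontr)
    assume ne: "g (w1 + w2) \<noteq> g w1 + g w2"
    let ?d = "g (w1 + w2) - g w1 - g w2"
    have dne: "?d \<noteq> 0" using ne by (simp add: algebra_simps)
    have "br (br x v) (br x (w1 + w2)) = br (br x v) (br x w1) + br (br x v) (br x w2)"
      by (simp add: br_addr)
    then have "sc (g (br v (w1 + w2))) x + sc (g (w1 + w2)) (br x v) - sc (g v) (br x (w1 + w2))
       = sc (g (br v w1)) x + sc (g w1) (br x v) - sc (g v) (br x w1)
         + (sc (g (br v w2)) x + sc (g w2) (br x v) - sc (g v) (br x w2))"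
      by (simp only: I2)
    then have "sc ?d (br x v) = sc (g (br v w1) + g (br v w2) - g (br v (w1 + w2))) x"
      by (simp add: br_addr algebra_simps)
    then have "sc (inverse ?d) (sc ?d (br x v)) = sc (inverse ?d) (sc (g (br v w1) + g (br v w2) - g (br v (w1 + w2))) x)"
      by simp
    then have "br x v = sc (inverse ?d * (g (br v w1) + g (br v w2) - g (br v (w1 + w2)))) x"
      using dne by simp
    with v show False by blast
  qed
  have g0: "g 0 = 0" using gadd[of 0 0] by (metis add.right_neutral add_left_cancel)
  obtain w where gw: "g w \<noteq> 0" and xw: "br x w \<noteq> 0"
  proof -
    have xv: "br x v \<noteq> 0" using v[of 0] by simp
    show ?thesis
    proof (cases "g v = 0")
      case False then show ?thesis using that xv by blast
    next
      case gv: True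
      show ?thesis
      proof (cases "br x w0 = 0")
        case False then show ?thesis using that gw0 by blast
      next
        case True
        have "g (w0 + v) \<noteq> 0" using gadd gv gw0 by simp
        moreover have "br x (w0 + v) \<noteq> 0" using True xv by (simp add: br_addr)
        ultimately show ?thesis using that by blast
      qed
    qed
  qed
  define \<mu> where "\<mu> = g (\<phi> w) / g w"
  have key: "\<phi> (br x w) = sc \<mu> (br x w)"
  proof -
    have e: "br (br x w) (br x (\<phi> w)) = sc (g (br w (\<phi> w))) x + sc (g (\<phi> w)) (br x w) - sc (g w) (br x (\<phi> w))"
      by (rule I2)
    have "br x (\<phi> w) = \<phi> (br x w)" by (simp add: phi_br)
    moreover have "br w (\<phi> w) = 0" using phi_br[of w w] br_self phi0 by simp
    moreover have "br (br x w) (\<phi> (br x w)) = 0"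
      using phi_br[of "br x w" "br x w"] br_self phi0 by simp
    ultimately have "0 = sc (g (\<phi> w)) (br x w) - sc (g w) (\<phi> (br x w))"
      using e g0 by simp
    then have "sc (g w) (\<phi> (br x w)) = sc (g (\<phi> w)) (br x w)" by simp
    then have "sc (inverse (g w)) (sc (g w) (\<phi> (br x w))) = sc (inverse (g w)) (sc (g (\<phi> w)) (br x w))"
      by simp
    then show ?thesis using gw by (simp add: \<mu>_def divide_inverse mult.commute)
  qed
  let ?N = "{a. \<phi> a = sc \<mu> a}"
  have "lie_ideal sc br ?N"
    unfolding lie_ideal_def m.subspace_def
  proof (intro conjI allI impI ballI)
    show "0 \<in> ?N" using phi0 by simp
    show "a + b \<in> ?N" if "a \<in> ?N" "b \<in> ?N" for a b
      using that by (simp add: phi_add m.scale_right_distrib)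
    show "sc c a \<in> ?N" if "a \<in> ?N" for c a
      using that by (simp add: phi_sc mult.commute)
    show "br y a \<in> ?N" if "a \<in> ?N" for y a
      using that by (simp add: phi_br br_scr)
  qed
  then have "?N = {0} \<or> ?N = UNIV" using ideals by blast
  moreover have "br x w \<in> ?N" using key by simp
  ultimately have "?N = UNIV" using xw by blast
  then show ?thesis by blast
qed

end



lemma card2_sub: "finite B \<Longrightarrow> card B \<le> 2 \<Longrightarrow> \<exists>b1 b2. B \<subseteq> {b1, b2}"
  by (metis Suc_1 Suc_eq_plus1_left card_1_singletonE card_2_iff card_seteq
    empty_subsetI le_add1 nle_le not_less_eq_eq subset_insertI2 subset_refl)

lemma ext_module:
  assumes fh: "field_hom \<iota>"
  shows "module (ext_scale \<iota>)"
proof -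
  have a: "\<iota> (a + b) = \<iota> a + \<iota> b" "\<iota> (a * b) = \<iota> a * \<iota> b" "\<iota> 1 = 1" for a b
    using fh unfolding field_hom_def by auto
  show ?thesis by unfold_locales (simp_all add: ext_scale_def a algebra_simps)
qed

lemma fh_facts:
  assumes fh: "field_hom (\<iota> :: 'k::field \<Rightarrow> 'K::field)"
  shows "\<iota> (a + b) = \<iota> a + \<iota> b" "\<iota> (a * b) = \<iota> a * \<iota> b" "\<iota> 1 = 1" "\<iota> 0 = 0"
    "\<iota> (- a) = - \<iota> a" "\<iota> (inverse a) = inverse (\<iota> a)" "\<iota> (a / b) = \<iota> a / \<iota> b" "\<iota> (a - b) = \<iota> a - \<iota> b"
proof -
  show ad: "\<iota> (a + b) = \<iota> a + \<iota> b" for a b using fh unfolding field_hom_def by auto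
  show mu: "\<iota> (a * b) = \<iota> a * \<iota> b" for a b using fh unfolding field_hom_def by auto
  show one: "\<iota> 1 = 1" using fh unfolding field_hom_def by auto
  show z: "\<iota> 0 = 0" using ad[of 0 0] by (metis add.right_neutral add_left_cancel)
  show ng: "\<iota> (- a) = - \<iota> a" for a using ad[of a "-a"] z by (simp add: eq_neg_iff_add_eq_0 add.commute)
  show inv: "\<iota> (inverse a) = inverse (\<iota> a)" for a
  proof (cases "a = 0")
    case True then show ?thesis using z by simp
  next
    case False
    then have "\<iota> a * \<iota> (inverse a) = 1" using mu[of a "inverse a"] one by simp
    then show ?thesis by (metis inverse_unique)
  qed
  show "\<iota> (a / b) = \<iota> a / \<iota> b" by (simp add: divide_inverse mu inv)
  show "\<iota> (a - b) = \<iota> a - \<iota> b" using ad[of a "-b"] ng[of b] by simp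
qed

lemma theta_exists:
  assumes fh: "field_hom (\<iota> :: 'k::field \<Rightarrow> 'K::field)" and deg: "ext_degree_le \<iota> 2"
  shows "\<exists>\<theta>. \<forall>y. \<exists>\<alpha> \<beta>. y = \<iota> \<alpha> + \<iota> \<beta> * \<theta>"
proof -
  interpret e: module "ext_scale \<iota>" by (rule ext_module[OF fh])
  note f = fh_facts[OF fh]
  obtain B where B: "finite B" "card B \<le> 2" "e.span B = UNIV"
    using deg unfolding ext_degree_le_def by blast
  obtain b1 b2 where sub: "B \<subseteq> {b1, b2}" using card2_sub[OF B(1,2)] by blast
  have two: "\<exists>\<alpha> \<beta>. y = \<iota> \<alpha> * b1 + \<iota> \<beta> * b2" for y
  proof -
    have "y \<in> e.span {b1, b2}" using e.span_mono[OF sub] B(3) by auto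
    then obtain u where "y = (\<Sum>v\<in>{b1,b2}. ext_scale \<iota> (u v) v)"
      using e.span_finite[of "{b1,b2}"] by auto
    then show ?thesis
    proof (cases "b1 = b2")
      case True
      then show ?thesis using \<open>y = _\<close> by (intro exI[of _ "u b1"] exI[of _ 0]) (simp add: ext_scale_def f)
    next
      case False
      then show ?thesis using \<open>y = _\<close> by (intro exI[of _ "u b1"] exI[of _ "u b2"]) (simp add: ext_scale_def)
    qed
  qed
  obtain a0 c0 where one: "1 = \<iota> a0 * b1 + \<iota> c0 * b2" using two by blast
  show ?thesis
  proof (cases "\<iota> c0 = 0")
    case False
    show ?thesis
    proof (rule exI[of _ b1], rule allI)
      fix y
      obtain \<alpha> \<beta> where y: "y = \<iota> \<alpha> * b1 + \<iota> \<beta> * b2" using two by blast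
      have b2: "b2 = (1 - \<iota> a0 * b1) / \<iota> c0" using one False by (simp add: field_simps)
      have "y = \<iota> (\<beta> / c0) + \<iota> (\<alpha> - \<beta> * a0 / c0) * b1"
        unfolding y b2 using False by (simp add: f field_simps)
      then show "\<exists>\<alpha> \<beta>. y = \<iota> \<alpha> + \<iota> \<beta> * b1" by blast
    qed
  next
    case True
    then have e1: "b1 * \<iota> a0 = 1" using one by (simp add: mult.commute)
    then have a0: "\<iota> a0 \<noteq> 0" by auto
    have b1: "b1 = 1 / \<iota> a0" using e1 a0 by (simp add: field_simps)
    show ?thesis
    proof (rule exI[of _ b2], rule allI)
      fix y
      obtain \<alpha> \<beta> where y: "y = \<iota> \<alpha> * b1 + \<iota> \<beta> * b2" using two by blast
      have "y = \<iota> (\<alpha> / a0) + \<iota> \<beta> * b2"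
        unfolding y b1 using a0 by (simp add: f)
      then show "\<exists>\<alpha> \<beta>. y = \<iota> \<alpha> + \<iota> \<beta> * b2" by blast
    qed
  qed
qed


theorem lemma5p2:
  fixes scL :: "'k::field \<Rightarrow> 'l::ab_group_add \<Rightarrow> 'l"
    and brL :: "'l \<Rightarrow> 'l \<Rightarrow> 'l"
    and \<iota> :: "'k \<Rightarrow> 'K::field"
    and scM :: "'K \<Rightarrow> 'm::ab_group_add \<Rightarrow> 'm"
    and brM :: "'m \<Rightarrow> 'm \<Rightarrow> 'm"
    and j :: "'l \<Rightarrow> 'm"
  assumes L: "lie_algebra scL brL"
    and simple: "simple_lie scL brL"
    and card_k: "infinite (UNIV :: 'k set) \<or> card (UNIV :: 'k set) > 2"
    and gen: "lie_generated scL brL {a. pure_extremal scL brL a} = UNIV"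
    and galois: "galois_ext \<iota>"
    and deg: "ext_degree_le \<iota> 2"
    and tensor: "scalar_extension \<iota> scL brL scM brM j"
    and lines: "geometry_has_lines scM brM"
    and sympl: "\<exists>a b. symplectic_pair scL brL a b"
  shows "simple_lie scM brM"
proof -
  have fh: "field_hom \<iota>" using galois unfolding galois_ext_def by blast
  note f = fh_facts[OF fh]
  obtain \<theta> where th: "\<And>y. \<exists>\<alpha> \<beta>. y = \<iota> \<alpha> + \<iota> \<beta> * \<theta>" using theta_exists[OF fh deg] by blast
  have LM: "lie_algebra scM brM" and jadd: "\<And>x y. j (x + y) = j x + j y"
    and jsc: "\<And>c x. j (scL c x) = scM (\<iota> c) (j x)" and jbr: "\<And>x y. j (brL x y) = brM (j x) (j y)"
    and jbasis: "\<And>B. \<not> module.dependent scL B \<Longrightarrow> module.span scL B = UNIV \<Longrightarrow>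
        inj_on j B \<and> \<not> module.dependent scM (j ` B) \<and> module.span scM (j ` B) = UNIV"
    using tensor unfolding scalar_extension_def by blast+
  interpret mL: module scL using L unfolding lie_algebra_def by simp
  interpret mM: module scM using LM unfolding lie_algebra_def by simp
  have j0: "j 0 = 0" using jadd[of 0 0] by (metis add.right_neutral add_left_cancel)
  have jneg: "j (- x) = - j x" for x using jadd[of x "-x"] j0 by (simp add: eq_neg_iff_add_eq_0 add.commute)
  have jdiff: "j (x - y) = j x - j y" for x y using jadd[of x "-y"] jneg[of y] by simp
  obtain BL where BL: "\<not> mL.dependent BL" "mL.span BL = UNIV"
  proof -
    have vs: "vector_space scL" using mL.module_axioms by (simp add: module_iff_vector_space)
    obtain B where "\<not> mL.dependent B" "UNIV \<subseteq> mL.span B"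
      using vector_space.basis_exists[OF vs, of UNIV] by metis
    then show ?thesis using that by blast
  qed
  have spanM: "mM.span (j ` BL) = UNIV" and indM: "\<not> mM.dependent (j ` BL)" using jbasis[OF BL] by auto
  obtain \<gamma> \<delta> where thsq: "\<theta> * \<theta> = \<iota> \<gamma> + \<iota> \<delta> * \<theta>" using th by blast
  let ?S = "{m. \<exists>a b. m = j a + scM \<theta> (j b)}"
  have Sadd: "m + m' \<in> ?S" if hyp: "m \<in> ?S" "m' \<in> ?S" for m m'
  proof -
    obtain a b a' b' where "m = j a + scM \<theta> (j b)" "m' = j a' + scM \<theta> (j b')" using hyp by blast
    then have "m + m' = j (a + a') + scM \<theta> (j (b + b'))" by (simp add: jadd algebra_simps)
    then show ?thesis by blast
  qed
  have Sio: "scM (\<iota> \<alpha>) m \<in> ?S" if hyp: "m \<in> ?S" for m \<alpha>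
  proof -
    obtain a b where "m = j a + scM \<theta> (j b)" using hyp by blast
    then have "scM (\<iota> \<alpha>) m = j (scL \<alpha> a) + scM \<theta> (j (scL \<alpha> b))"
      by (simp add: jsc algebra_simps mult.commute)
    then show ?thesis by blast
  qed
  have Sth: "scM \<theta> m \<in> ?S" if hyp: "m \<in> ?S" for m
  proof -
    obtain a b where m: "m = j a + scM \<theta> (j b)" using hyp by blast
    have "scM \<theta> m = scM \<theta> (j a) + scM (\<theta> * \<theta>) (j b)" unfolding m by (simp add: algebra_simps)
    also have "\<dots> = j (scL \<gamma> b) + scM \<theta> (j (a + scL \<delta> b))"
      unfolding thsq by (simp add: jsc jadd algebra_simps mult.commute)
    finally show ?thesis by blast
  qed
  have rep: "\<exists>a b. m = j a + scM \<theta> (j b)" for m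
  proof -
    have "mM.subspace ?S"
    proof (rule mM.subspaceI)
      show "0 \<in> ?S" by (rule CollectI, rule exI[of _ 0], rule exI[of _ 0]) (simp add: j0)
      show "x + y \<in> ?S" if "x \<in> ?S" "y \<in> ?S" for x y using Sadd that by blast
      show "scM c x \<in> ?S" if "x \<in> ?S" for c x
      proof -
        obtain \<alpha> \<beta> where c: "c = \<iota> \<alpha> + \<iota> \<beta> * \<theta>" using th by blast
        have e: "scM c x = scM (\<iota> \<alpha>) x + scM (\<iota> \<beta>) (scM \<theta> x)" unfolding c by (simp add: algebra_simps)
        show ?thesis unfolding e by (rule Sadd[OF Sio[OF that] Sio[OF Sth[OF that]]])
      qed
    qed
    moreover have "j ` BL \<subseteq> ?S"
    proof
      fix m assume "m \<in> j ` BL"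
      then obtain l where "m = j l" by blast
      then have "m = j l + scM \<theta> (j 0)" by (simp add: j0)
      then show "m \<in> ?S" by blast
    qed
    ultimately have "mM.span (j ` BL) \<subseteq> ?S" by (rule mM.span_minimal[rotated])
    then show ?thesis using spanM by blast
  qed
  have idealsL: "\<And>I. lie_ideal scL brL I \<Longrightarrow> I = {0} \<or> I = UNIV" using simple unfolding simple_lie_def by blast
  obtain x0 y0 where nab: "brL x0 y0 \<noteq> 0" using simple unfolding simple_lie_def by blast
  have pre: "lie_ideal scL brL {a. j a \<in> J}" if J: "lie_ideal scM brM J" for J
  proof -
    have Js: "mM.subspace J" and Jb: "\<And>x y. y \<in> J \<Longrightarrow> brM x y \<in> J" using J unfolding lie_ideal_def by auto
    show ?thesis unfolding lie_ideal_def
    proof (intro conjI allI impI mL.subspaceI)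
      show "0 \<in> {a. j a \<in> J}" using mM.subspace_0[OF Js] j0 by simp
      show "x + y \<in> {a. j a \<in> J}" if "x \<in> {a. j a \<in> J}" "y \<in> {a. j a \<in> J}" for x y
        using that Js jadd unfolding mM.subspace_def by auto
      show "scL c x \<in> {a. j a \<in> J}" if "x \<in> {a. j a \<in> J}" for c x
        using that Js jsc unfolding mM.subspace_def by auto
      show "brL x y \<in> {a. j a \<in> J}" if "y \<in> {a. j a \<in> J}" for x y
        using that Jb jbr by auto
    qed
  qed
  have jinj: "j a = 0 \<Longrightarrow> a = 0" for a
  proof -
    have "lie_ideal scM brM {0}" unfolding lie_ideal_def using br_0r[OF LM] by simp
    then have "{a. j a \<in> {0}} = {0} \<or> {a. j a \<in> {0}} = UNIV" using pre idealsL by blast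
    moreover have "{a. j a \<in> {0}} \<noteq> UNIV"
    proof
      assume "{a. j a \<in> {0}} = UNIV"
      then have jz: "\<And>a. j a = 0" by auto
      have "BL = {}"
      proof (rule ccontr)
        assume "BL \<noteq> {}"
        then have "0 \<in> j ` BL" using jz by auto
        then show False using indM mM.dependent_zero by blast
      qed
      then have "x0 = 0" using BL(2) by auto
      then show False using nab br_0l[OF L] by simp
    qed
    moreover assume "j a = 0"
    ultimately show "a = 0" by auto
  qed
  have nabM: "brM (j x0) (j y0) \<noteq> 0" using nab jinj jbr by metis
  have idealsM: "J = {0} \<or> J = UNIV" if J: "lie_ideal scM brM J" for J
  proof -
    have Js: "mM.subspace J" and Jb: "\<And>x y. y \<in> J \<Longrightarrow> brM x y \<in> J" using J unfolding lie_ideal_def by auto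
    have J0: "0 \<in> J" using mM.subspace_0[OF Js] .
    have Jadd: "x \<in> J \<Longrightarrow> y \<in> J \<Longrightarrow> x + y \<in> J" for x y using Js unfolding mM.subspace_def by blast
    have Jsc: "x \<in> J \<Longrightarrow> scM c x \<in> J" for c x using Js unfolding mM.subspace_def by blast
    have Jdiff: "x \<in> J \<Longrightarrow> y \<in> J \<Longrightarrow> x - y \<in> J" for x y
      using Jadd[of x "scM (-1) y"] Jsc[of y "-1"] by simp
    have "{a. j a \<in> J} = {0} \<or> {a. j a \<in> J} = UNIV" using pre[OF J] idealsL by blast
    then show ?thesis
    proof
      assume U: "{a. j a \<in> J} = UNIV"
      then have jJ: "j a \<in> J" for a by blast
      have "m \<in> J" for m
      proof -
        obtain a b where "m = j a + scM \<theta> (j b)" using rep by blast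
        then show ?thesis using Jadd[OF jJ Jsc[OF jJ]] by simp
      qed
      then show ?thesis by blast
    next
      assume I0: "{a. j a \<in> J} = {0}"
      then have hI: "j a \<in> J \<Longrightarrow> a = 0" for a by blast
      show ?thesis
      proof (cases "\<theta> = 0")
        case True
        have "m = 0" if "m \<in> J" for m
        proof -
          obtain a b where m: "m = j a + scM \<theta> (j b)" using rep by blast
          then have "j a \<in> J" using that True by simp
          then have "a = 0" using hI by blast
          then show ?thesis using m True j0 by simp
        qed
        then show ?thesis using J0 by blast
      next
        case thnz: False
        have uniq: "b = b'" if "j a + scM \<theta> (j b) \<in> J" "j a + scM \<theta> (j b') \<in> J" for a b b'
        proof -
          have "(j a + scM \<theta> (j b)) - (j a + scM \<theta> (j b')) \<in> J" using Jdiff that by blast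
          then have "scM \<theta> (j (b - b')) \<in> J" by (simp add: jdiff algebra_simps)
          then have "scM (inverse \<theta>) (scM \<theta> (j (b - b'))) \<in> J" by (rule Jsc)
          then have "j (b - b') \<in> J" using thnz by simp
          then have "b - b' = 0" by (rule hI)
          then show ?thesis by simp
        qed
        let ?P = "{a. \<exists>b. j a + scM \<theta> (j b) \<in> J}"
        have "lie_ideal scL brL ?P" unfolding lie_ideal_def
        proof (intro conjI allI impI mL.subspaceI)
          show "0 \<in> ?P" using J0 j0 by (auto intro!: exI[of _ 0])
          show "x + y \<in> ?P" if hyp: "x \<in> ?P" "y \<in> ?P" for x y
          proof -
            obtain b b' where "j x + scM \<theta> (j b) \<in> J" "j y + scM \<theta> (j b') \<in> J" using hyp by blast
            then have "(j x + scM \<theta> (j b)) + (j y + scM \<theta> (j b')) \<in> J" by (rule Jadd)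
            then have "j (x + y) + scM \<theta> (j (b + b')) \<in> J" by (simp add: jadd algebra_simps)
            then show ?thesis by blast
          qed
          show "scL c x \<in> ?P" if hyp: "x \<in> ?P" for c x
          proof -
            obtain b where "j x + scM \<theta> (j b) \<in> J" using hyp by blast
            then have "scM (\<iota> c) (j x + scM \<theta> (j b)) \<in> J" by (rule Jsc)
            then have "j (scL c x) + scM \<theta> (j (scL c b)) \<in> J" by (simp add: jsc algebra_simps mult.commute)
            then show ?thesis by blast
          qed
          show "brL x y \<in> ?P" if hyp: "y \<in> ?P" for x y
          proof -
            obtain b where "j y + scM \<theta> (j b) \<in> J" using hyp by blast
            then have "brM (j x) (j y + scM \<theta> (j b)) \<in> J" by (rule Jb)
            then have "j (brL x y) + scM \<theta> (j (brL x b)) \<in> J" by (simp add: jbr br_addr[OF LM] br_scr[OF LM])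
            then show ?thesis by blast
          qed
        qed
        then have "?P = {0} \<or> ?P = UNIV" using idealsL by blast
        then show ?thesis
        proof
          assume P0: "?P = {0}"
          have "m = 0" if "m \<in> J" for m
          proof -
            obtain a b where m: "m = j a + scM \<theta> (j b)" using rep by blast
            then have "a \<in> ?P" using that by blast
            then have "a = 0" using P0 by blast
            then have "j 0 + scM \<theta> (j b) \<in> J" using m that by simp
            moreover have "j 0 + scM \<theta> (j 0) \<in> J" using J0 j0 by simp
            ultimately have "b = 0" using uniq by blast
            then show ?thesis using m \<open>a = 0\<close> j0 by simp
          qed
          then show ?thesis using J0 by blast
        next
          assume PU: "?P = UNIV"
          define \<phi> where "\<phi> a = (SOME b. j a + scM \<theta> (j b) \<in> J)" for a
          have phiJ: "j a + scM \<theta> (j (\<phi> a)) \<in> J" for a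
            unfolding \<phi>_def using PU by (rule_tac someI_ex) blast
          have phi_add: "\<phi> (a + b) = \<phi> a + \<phi> b" for a b
          proof -
            have "(j a + scM \<theta> (j (\<phi> a))) + (j b + scM \<theta> (j (\<phi> b))) \<in> J" using Jadd phiJ by blast
            then have "j (a + b) + scM \<theta> (j (\<phi> a + \<phi> b)) \<in> J" by (simp add: jadd algebra_simps)
            then show ?thesis using uniq phiJ by blast
          qed
          have phi_sc: "\<phi> (scL c a) = scL c (\<phi> a)" for c a
          proof -
            have "scM (\<iota> c) (j a + scM \<theta> (j (\<phi> a))) \<in> J" using Jsc phiJ by blast
            then have "j (scL c a) + scM \<theta> (j (scL c (\<phi> a))) \<in> J" by (simp add: jsc algebra_simps mult.commute)
            then show ?thesis using uniq phiJ by blast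
          qed
          have phi_br: "\<phi> (brL a b) = brL a (\<phi> b)" for a b
          proof -
            have "brM (j a) (j b + scM \<theta> (j (\<phi> b))) \<in> J" using Jb phiJ by blast
            then have "j (brL a b) + scM \<theta> (j (brL a (\<phi> b))) \<in> J" by (simp add: jbr br_addr[OF LM] br_scr[OF LM])
            then show ?thesis using uniq phiJ by blast
          qed
          obtain x where px: "pure_extremal scL brL x" using sympl unfolding symplectic_pair_def by blast
          obtain \<mu> where mu: "\<And>a. \<phi> a = scL \<mu> a"
            using centroid_scalar[OF L simple px phi_add phi_sc phi_br] by blast
          have inJ: "scM (1 + \<theta> * \<iota> \<mu>) (j a) \<in> J" for a
            using phiJ[of a] unfolding mu by (simp add: jsc algebra_simps)
          show ?thesis
          proof (cases "1 + \<theta> * \<iota> \<mu> = 0")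
            case False
            have "scM (inverse (1 + \<theta> * \<iota> \<mu>)) (scM (1 + \<theta> * \<iota> \<mu>) (j x0)) \<in> J" using inJ Jsc by blast
            then have "j x0 \<in> J" using False by simp
            then have "x0 = 0" using hI by blast
            then show ?thesis using nab br_0l[OF L] by simp
          next
            case True
            then have tm: "\<theta> * \<iota> \<mu> = - 1" by (simp add: eq_neg_iff_add_eq_0 add.commute)
            have "m = 0" if "m \<in> J" for m
            proof -
              obtain a b where m: "m = j a + scM \<theta> (j b)" using rep by blast
              have "scM (\<iota> \<mu>) m \<in> J" using Jsc that by blast
              moreover have "scM (\<iota> \<mu>) m = j (scL \<mu> a - b)"
                unfolding m by (simp add: jsc jdiff algebra_simps tm mult.commute)
              ultimately have "j (scL \<mu> a - b) \<in> J" by simp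
              then have "scL \<mu> a - b = 0" by (rule hI)
              then have "b = scL \<mu> a" by simp
              then have "m = scM (1 + \<theta> * \<iota> \<mu>) (j a)" unfolding m by (simp add: jsc algebra_simps)
              then show ?thesis using True by simp
            qed
            then show ?thesis using J0 by blast
          qed
        qed
      qed
    qed
  qed
  show ?thesis unfolding simple_lie_def using nabM idealsM by blast
qed

end
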